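(* The group $G_3$ has exponential word growth (with respect to the generating set $\{a,b,c\}$).
   Context: Let $X=\{1,2,3\}$ and $T$ the ternary rooted tree with vertex set $X^*$. $\mathrm{Aut}(T)$ is the group of root-preserving automorphisms with product left-to-right: $(gh)(u)=h(g(u))$. Sections $g|_u$ are defined by $g(uv)=g(u)\,g|_u(v)$; we write $g=(g|_1,g|_2,g|_3)\lambda_g$ with $\lambda_g\in S_3$ the action on the first level; $e$ is the identity. $G_3=\langle a,b,c\rangle\le\mathrm{Aut}(T)$ with $a=(a,b,e)(1\,2)$, $b=(e,b,c)(2\,3)$, $c=(a,e,c)(3\,1)$. *)

theory Defs
  imports Complex_Main
begin

text \<open>The alphabet X = {1,2,3} and the ternary rooted tree with vertex set X*
  (finite words over X, represented as lists; the root is the empty list).\<close>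
datatype letter = L1 | L2 | L3

datatype gen = A | B | C

text \<open>The action of the generators a, b, c on X*, read off from the wreath recursion
  g(x v) = lambda_g(x) g|_x(v):
  a = (a,b,e)(1 2),  b = (e,b,c)(2 3),  c = (a,e,c)(3 1).\<close>
fun act :: "gen \<Rightarrow> letter list \<Rightarrow> letter list" where
  "act g [] = []"
| "act A (L1 # v) = L2 # act A v"
| "act A (L2 # v) = L1 # act B v"
| "act A (L3 # v) = L3 # v"
| "act B (L1 # v) = L1 # v"
| "act B (L2 # v) = L3 # act B v"
| "act B (L3 # v) = L2 # act C v"
| "act C (L1 # v) = L3 # act A v"
| "act C (L2 # v) = L2 # v"
| "act C (L3 # v) = L1 # act C v"

definition sym_gens :: "(letter list \<Rightarrow> letter list) set" where
  "sym_gens = act ` UNIV \<union> (\<lambda>g. inv (act g)) ` UNIV"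

text \<open>Evaluation of a word s_1 ... s_k in the group, with the left-to-right product
  convention (gh)(u) = h(g(u)): the element acts as s_k \<circ> ... \<circ> s_1.\<close>
definition eval_word :: "(letter list \<Rightarrow> letter list) list \<Rightarrow> (letter list \<Rightarrow> letter list)" where
  "eval_word ws = fold (\<lambda>g f. g \<circ> f) ws id"

definition ball :: "nat \<Rightarrow> (letter list \<Rightarrow> letter list) set" where
  "ball n = {eval_word ws | ws. length ws \<le> n \<and> set ws \<subseteq> sym_gens}"

definition growth :: "nat \<Rightarrow> nat" where
  "growth n = card (ball n)"

definition exponential_growth :: "(nat \<Rightarrow> nat) \<Rightarrow> bool" where
  "exponential_growth \<gamma> \<longleftrightarrow> (\<exists>C::real. C > 1 \<and> (\<forall>n. real (\<gamma> n) \<ge> C ^ n))"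

end

theory Submission
  imports Defs
begin

fun mv :: "gen \<Rightarrow> letter \<Rightarrow> letter" where
  "mv A L1 = L2" | "mv A L2 = L1" | "mv A L3 = L3"
| "mv B L1 = L1" | "mv B L2 = L3" | "mv B L3 = L2"
| "mv C L1 = L3" | "mv C L2 = L2" | "mv C L3 = L1"

fun sig :: "letter \<Rightarrow> gen" where
  "sig L1 = A" | "sig L2 = B" | "sig L3 = C"

definition sg :: "gen \<Rightarrow> letter \<Rightarrow> gen list" where
  "sg g x = (if mv g x = x then [] else [sig x])"

fun ev :: "gen list \<Rightarrow> letter list \<Rightarrow> letter list" where
  "ev [] v = v"
| "ev (g # w) v = ev w (act g v)"

fun pm :: "gen list \<Rightarrow> letter \<Rightarrow> letter" where
  "pm [] x = x"
| "pm (g # w) x = pm w (mv g x)"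

fun sec :: "gen list \<Rightarrow> letter \<Rightarrow> gen list" where
  "sec [] x = []"
| "sec (g # w) x = sg g x @ sec w (mv g x)"

fun actinv :: "gen \<Rightarrow> letter list \<Rightarrow> letter list" where
  "actinv g [] = []"
| "actinv A (L2 # v) = L1 # actinv A v"
| "actinv A (L1 # v) = L2 # actinv B v"
| "actinv A (L3 # v) = L3 # v"
| "actinv B (L1 # v) = L1 # v"
| "actinv B (L3 # v) = L2 # actinv B v"
| "actinv B (L2 # v) = L3 # actinv C v"
| "actinv C (L3 # v) = L1 # actinv A v"
| "actinv C (L2 # v) = L2 # v"
| "actinv C (L1 # v) = L3 # actinv C v"

lemma act_actinv: "act g (actinv g v) = v"
  by (induction g v rule: actinv.induct) auto

lemma actinv_act: "actinv g (act g v) = v"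
  by (induction g v rule: act.induct) auto

lemma act_inj: "act g a = act g b \<Longrightarrow> a = b"
  by (metis actinv_act)

lemma ev_nil[simp]: "ev w [] = []"
  by (induction w) auto

lemma ev_append: "ev (a @ b) v = ev b (ev a v)"
  by (induction a arbitrary: v) auto

lemma ev_inj: "ev w a = ev w b \<Longrightarrow> a = b"
  by (induction w arbitrary: a b) (auto dest: act_inj)

lemma ev_surj: "\<exists>v. ev w v = u"
proof (induction w arbitrary: u)
  case Nil then show ?case by auto
next
  case (Cons g w)
  then obtain v where "ev w v = u" by blast
  then show ?case by (metis act_actinv ev.simps(2))
qed

lemma act_cons: "act g (x # v) = mv g x # ev (sg g x) v"
  by (cases g; cases x) (auto simp: sg_def)

lemma ev_cons: "ev w (x # v) = pm w x # ev (sec w x) v"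
  by (induction w arbitrary: x v) (auto simp: act_cons ev_append)

lemma mv_mv: "mv g (mv g x) = x"
  by (cases g; cases x) auto

lemma pm_append: "pm (a @ b) x = pm b (pm a x)"
  by (induction a arbitrary: x) auto

lemma sec_append: "sec (a @ b) x = sec a x @ sec b (pm a x)"
  by (induction a arbitrary: x) auto

lemma len_sg: "length (sg g x) \<le> 1"
  by (simp add: sg_def)

lemma len_sec: "length (sec w x) \<le> length w"
proof (induction w arbitrary: x)
  case (Cons g w)
  have "length (sec w (mv g x)) \<le> length w" by (rule Cons.IH)
  then show ?case using len_sg[of g x] by (simp only: sec.simps length_append length_Cons)
qed simp

lemma sec_full:
  assumes "length (sec (g # w) x) \<ge> Suc (length w)"
  shows "sec (g # w) x = sig x # sec w (mv g x)"
proof -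
  have "length (sec w (mv g x)) \<le> length w" by (rule len_sec)
  then have "sg g x \<noteq> []" using assms by auto
  then show ?thesis by (auto simp: sg_def split: if_splits)
qed

lemma ev_eq_D:
  assumes "ev u = ev v"
  shows "pm u x = pm v x" "ev (sec u x) = ev (sec v x)"
proof -
  have "\<And>t. ev u (x # t) = ev v (x # t)" using assms by simp
  then have h: "\<And>t. pm u x = pm v x \<and> ev (sec u x) t = ev (sec v x) t" by (simp add: ev_cons)
  then show "pm u x = pm v x" by blast
  show "ev (sec u x) = ev (sec v x)" using h by blast
qed

fun pmi :: "gen list \<Rightarrow> letter \<Rightarrow> letter" where
  "pmi [] y = y"
| "pmi (g # w) y = mv g (pmi w y)"

lemma pm_pmi: "pm w (pmi w y) = y"
  by (induction w arbitrary: y) (auto simp: mv_mv)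

lemma ev_cancel_hd: "ev (s # a) = ev (s # b) \<Longrightarrow> ev a = ev b"
proof
  fix t
  assume "ev (s # a) = ev (s # b)"
  then have "ev a (act s (actinv s t)) = ev b (act s (actinv s t))" by (metis ev.simps(2))
  then show "ev a t = ev b t" by (simp add: act_actinv)
qed

fun fx :: "gen \<Rightarrow> letter" where
  "fx A = L3" | "fx B = L1" | "fx C = L2"

lemma mv_fix_iff: "mv g x = x \<longleftrightarrow> x = fx g"
  by (cases g; cases x) auto

lemma fx_moved: "k \<noteq> g \<Longrightarrow> mv g (fx k) \<noteq> fx k"
  by (cases g; cases k) auto

lemma fx_moved2: "g \<noteq> h \<Longrightarrow> k \<noteq> g \<Longrightarrow> k \<noteq> h \<Longrightarrow> mv g (fx k) \<noteq> mv h (fx k)"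
  by (cases g; cases h; cases k) auto

lemma sig_inj: "sig x = sig y \<Longrightarrow> x = y"
  by (cases x; cases y) auto

lemma ev_rot:
  assumes "ev (a @ b) = id"
  shows "ev (b @ a) = id"
proof
  fix w
  obtain v where v: "ev a v = w" using ev_surj by blast
  have "ev b (ev a v) = v" using assms by (metis ev_append id_apply)
  then show "ev (b @ a) w = id w" using v by (simp add: ev_append)
qed

lemma nonconst_split:
  assumes "\<exists>y\<in>set u. y \<noteq> hd u"
  shows "\<exists>a b. u = a @ b \<and> a \<noteq> [] \<and> b \<noteq> [] \<and> last a \<noteq> hd b"
  using assms
proof (induction u)
  case Nil then show ?case by simp
next
  case (Cons z u)
  show ?case
  proof (cases "u = []")
    case True then show ?thesis using Cons by simp
  next
    case False
    show ?thesis
    proof (cases "hd u = z")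
      case True
      then have "\<exists>y\<in>set u. y \<noteq> hd u" using Cons.prems by auto
      then obtain a b where "u = a @ b" "a \<noteq> []" "b \<noteq> []" "last a \<noteq> hd b" using Cons.IH by blast
      then show ?thesis by (intro exI[of _ "z # a"] exI[of _ b]) auto
    next
      case F: False
      show ?thesis using False F by (intro exI[of _ "[z]"] exI[of _ u]) auto
    qed
  qed
qed

lemma reduce_fl:
  assumes "ev w = id" "w \<noteq> []" "hd w \<noteq> last w"
  shows "\<exists>w'. w' \<noteq> [] \<and> length w' < length w \<and> ev w' = id"
proof -
  obtain h m where hm: "w = h # m" using assms(2) by (cases w) auto
  obtain m' g where mg: "w = m' @ [g]" using assms(2) by (cases w rule: rev_exhaust) auto
  have gh: "g \<noteq> h" using assms(3) hm mg by (metis last_snoc list.sel(1))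
  define y where "y = fx h"
  have hy: "mv h y = y" unfolding y_def by (simp add: mv_fix_iff)
  have gy: "mv g y \<noteq> y" using gh unfolding y_def mv_fix_iff
    by (cases g; cases h) auto
  have idD: "ev w = ev []" using assms(1) by (auto simp: id_def)
  have p: "pm w y = y" using ev_eq_D(1)[OF idD] by simp
  have e: "ev (sec w y) = id" using ev_eq_D(2)[OF idD] by (auto simp: id_def)
  have "sec w y = sec m (mv h y)" using hm hy by (simp add: sg_def)
  then have l: "length (sec w y) < length w" using len_sec[of m "mv h y"] hm by simp
  have "pm m' y = mv g y" using p mg by (simp add: pm_append) (metis mv_mv)
  then have "sec w y = sec m' y @ sg g (mv g y)" using mg by (simp add: sec_append)
  moreover have "sg g (mv g y) \<noteq> []" using gy by (simp add: sg_def mv_mv)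
  ultimately have "sec w y \<noteq> []" by simp
  then show ?thesis using l e by blast
qed

lemma reduce_nc:
  assumes "ev w = id" "\<exists>y\<in>set w. y \<noteq> hd w"
  shows "\<exists>w'. w' \<noteq> [] \<and> length w' < length w \<and> ev w' = id"
proof -
  obtain a b where ab: "w = a @ b" "a \<noteq> []" "b \<noteq> []" "last a \<noteq> hd b"
    using nonconst_split[OF assms(2)] by blast
  have "ev (b @ a) = id" using ev_rot assms(1) ab(1) by blast
  moreover have "hd (b @ a) \<noteq> last (b @ a)" using ab by auto
  ultimately obtain w' where "w' \<noteq> []" "length w' < length (b @ a)" "ev w' = id"
    using reduce_fl[of "b @ a"] ab by auto
  then show ?thesis using ab by auto
qed

lemma reduce:
  assumes "ev w = id" "w \<noteq> []"
  shows "\<exists>w'. w' \<noteq> [] \<and> length w' \<le> length w \<and> ev w' = id \<and> (\<exists>y\<in>set w'. y \<noteq> hd w')"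
proof (cases "\<exists>y\<in>set w. y \<noteq> hd w")
  case True then show ?thesis using assms by blast
next
  case False
  obtain g r where gr: "w = g # r" using assms(2) by (cases w) auto
  define y where "y = (case g of A \<Rightarrow> L1 | B \<Rightarrow> L2 | C \<Rightarrow> L3)"
  have gy: "mv g y \<noteq> y" unfolding y_def by (cases g) auto
  have idD: "ev w = ev []" using assms(1) by (auto simp: id_def)
  have e: "ev (sec w y) = id" using ev_eq_D(2)[OF idD] by (auto simp: id_def)
  show ?thesis
  proof (cases r)
    case Nil
    have "ev w [y] = [mv g y]" using gr Nil by (simp add: act_cons)
    then show ?thesis using assms(1) gy by simp
  next
    case (Cons g2 r2)
    have g2: "g2 = g" using False gr Cons by auto
    have gy2: "mv g (mv g y) \<noteq> mv g y" using gy by (simp add: mv_mv)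
    have s: "sec w y = sig y # sig (mv g y) # sec r2 (mv g (mv g y))"
      using gr Cons g2 gy gy2 by (simp add: sg_def)
    have "sig y \<noteq> sig (mv g y)" using gy sig_inj by metis
    then have nc: "\<exists>z\<in>set (sec w y). z \<noteq> hd (sec w y)" using s by auto
    show ?thesis using nc e len_sec[of w y] s by (intro exI[of _ "sec w y"]) auto
  qed
qed

lemma main: "ev u = ev v \<Longrightarrow> u = v"
proof (induction "length u + length v" arbitrary: u v rule: less_induct)
  case less
  have nonid: False if a1: "ev w = id" and a2: "w \<noteq> []" and a3: "length w \<le> length u + length v" for w
  proof -
    obtain w1 where w1: "w1 \<noteq> []" "length w1 \<le> length w" "ev w1 = id" "\<exists>y\<in>set w1. y \<noteq> hd w1"
      using reduce[OF a1 a2] by blast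
    obtain w2 where w2: "w2 \<noteq> []" "length w2 < length w1" "ev w2 = id"
      using reduce_nc[OF w1(3,4)] by blast
    have "ev w2 = ev []" using w2(3) by (auto simp: id_def)
    then have "w2 = []" using less.hyps[of w2 "[]"] w2(2) w1(2) a3 by simp
    then show False using w2(1) by simp
  qed
  show ?case
  proof (cases "u = [] \<or> v = []")
    case True
    then show ?thesis
    proof
      assume "u = []"
      then have "ev v = id" using less.prems by (auto simp: id_def fun_eq_iff)
      then show ?thesis using nonid[of v] \<open>u = []\<close> by (cases "v = []") auto
    next
      assume "v = []"
      then have "ev u = id" using less.prems by (auto simp: id_def fun_eq_iff)
      then show ?thesis using nonid[of u] \<open>v = []\<close> by (cases "u = []") auto
    qed
  next
    case False
    obtain u' g where ug: "u = u' @ [g]" using False by (cases u rule: rev_exhaust) auto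
    obtain v' h where vh: "v = v' @ [h]" using False by (cases v rule: rev_exhaust) auto
    show ?thesis
    proof (cases "g = h")
      case True
      have "ev u' = ev v'"
      proof
        fix t
        have "ev u t = ev v t" using less.prems by simp
        then have "act g (ev u' t) = act g (ev v' t)"
          using ug vh True by (simp add: ev_append)
        then show "ev u' t = ev v' t" by (rule act_inj)
      qed
      then have "u' = v'" using less.hyps[of u' v'] ug vh by simp
      then show ?thesis using ug vh True by simp
    next
      case gh: False
      obtain k where k: "k \<noteq> g" "k \<noteq> h" using gh by (cases g; cases h) auto
      define y where "y = fx k"
      have gy: "mv g y \<noteq> y" and hy: "mv h y \<noteq> y"
        using k unfolding y_def by (auto simp: fx_moved)
      have ghy: "mv g y \<noteq> mv h y" unfolding y_def using gh k by (rule fx_moved2)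
      define x where "x = pmi u' (mv g y)"
      have pu': "pm u' x = mv g y" unfolding x_def by (simp add: pm_pmi)
      have "pm u x = y" using pu' ug by (simp add: pm_append mv_mv)
      moreover have "pm u x = pm v x" using ev_eq_D(1)[OF less.prems] .
      ultimately have "pm v x = y" by simp
      then have pv': "pm v' x = mv h y" using vh by (simp add: pm_append) (metis mv_mv)
      have su: "sec u x = sec u' x @ [sig (mv g y)]"
        using ug pu' gy by (simp add: sec_append sg_def mv_mv)
      have sv: "sec v x = sec v' x @ [sig (mv h y)]"
        using vh pv' hy by (simp add: sec_append sg_def mv_mv)
      have lastne: "sig (mv g y) \<noteq> sig (mv h y)" using ghy sig_inj by metis
      have ne: "sec u x \<noteq> sec v x" using su sv lastne by (metis last_snoc)
      have eqs: "ev (sec u x) = ev (sec v x)" using ev_eq_D(2)[OF less.prems] .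
      have lu: "length (sec u x) \<le> length u" and lv: "length (sec v x) \<le> length v"
        by (rule len_sec)+
      show ?thesis
      proof (cases "length (sec u x) + length (sec v x) < length u + length v")
        case True
        then show ?thesis using less.hyps[OF True eqs] ne by simp
      next
        case False
        then have fu: "length (sec u x) = length u" and fv: "length (sec v x) = length v"
          using lu lv by linarith+
        obtain u1 ur where u1: "u = u1 # ur" using \<open>\<not> (u = [] \<or> v = [])\<close> by (cases u) auto
        obtain v1 vr where v1: "v = v1 # vr" using \<open>\<not> (u = [] \<or> v = [])\<close> by (cases v) auto
        have su2: "sec u x = sig x # sec ur (mv u1 x)"
          using sec_full[of ur u1 x] fu u1 by simp
        have sv2: "sec v x = sig x # sec vr (mv v1 x)"
          using sec_full[of vr v1 x] fv v1 by simp
        have E: "ev (sec ur (mv u1 x)) = ev (sec vr (mv v1 x))"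
          by (rule ev_cancel_hd[of "sig x"]) (use eqs su2 sv2 in simp)
        have L: "length (sec ur (mv u1 x)) + length (sec vr (mv v1 x)) < length u + length v"
        proof -
          have "length (sec u x) = Suc (length (sec ur (mv u1 x)))" using su2 by simp
          moreover have "length (sec v x) = Suc (length (sec vr (mv v1 x)))" using sv2 by simp
          ultimately show ?thesis using fu fv by linarith
        qed
        have "sec ur (mv u1 x) = sec vr (mv v1 x)" using less.hyps[OF L E] .
        then show ?thesis using su2 sv2 ne by simp
      qed
    qed
  qed
qed


lemma fold_map_act: "fold (\<lambda>g f. g \<circ> f) (map act w) f0 = (\<lambda>v. ev w (f0 v))"
  by (induction w arbitrary: f0) (auto simp: comp_def)

lemma eval_map: "eval_word (map act w) = ev w"
  unfolding eval_word_def by (simp add: fold_map_act)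

lemma UNIV_gen: "(UNIV :: gen set) = {A, B, C}"
  using gen.exhaust by auto

lemma finite_gen: "finite (UNIV :: gen set)"
  by (simp add: UNIV_gen)

lemma card_gen: "card (UNIV :: gen set) = 3"
  by (simp add: UNIV_gen)

lemma growth_ge: "3 ^ n \<le> growth n"
proof -
  let ?W = "{w :: gen list. set w \<subseteq> UNIV \<and> length w = n}"
  have cW: "card ?W = 3 ^ n" using card_lists_length_eq[OF finite_gen] card_gen by simp
  have inj: "inj_on (\<lambda>w. eval_word (map act w)) ?W"
    by (rule inj_onI) (simp add: eval_map main)
  have sub: "(\<lambda>w. eval_word (map act w)) ` ?W \<subseteq> ball n"
  proof
    fix f assume "f \<in> (\<lambda>w. eval_word (map act w)) ` ?W"
    then obtain w where "length w = n" "f = eval_word (map act w)" by auto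
    moreover have "set (map act w) \<subseteq> sym_gens" unfolding sym_gens_def by auto
    ultimately show "f \<in> ball n" unfolding ball_def by force
  qed
  have fs: "finite sym_gens" unfolding sym_gens_def using finite_gen by simp
  have "ball n = eval_word ` {ws. set ws \<subseteq> sym_gens \<and> length ws \<le> n}"
    unfolding ball_def by auto
  then have fb: "finite (ball n)" using finite_lists_length_le[OF fs] by simp
  have "card ((\<lambda>w. eval_word (map act w)) ` ?W) \<le> card (ball n)"
    by (rule card_mono[OF fb sub])
  then show ?thesis using card_image[OF inj] cW unfolding growth_def by simp
qed

theorem corollary5p3:
  shows "exponential_growth growth"
  unfolding exponential_growth_def
proof (intro exI[of _ "3::real"] conjI allI)
  fix n
  have "real (3 ^ n) \<le> real (growth n)" using growth_ge of_nat_le_iff by blast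
  then show "(3::real) ^ n \<le> real (growth n)" by simp
qed simp

end
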